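(* Let $q\neq-1$ be real and $n\ge1$. Then $T_n(x,s,q)$ is the weight of the set of all tilings of an $n$-board whose last tile (the tile covering cell $n$) is either a white square or a domino. Consequently, for $n>0$, $$T_n(x,s,q)=x\,U_{n-1}(x,s,q)+q^{n-1}s\,U_{n-2}(x,s,q).$$
   Context: $T_0=1$, $T_1=x$, $T_n(x,s,q)=(1+q^{n-1})x\,T_{n-1}(x,s,q)+q^{n-1}s\,T_{n-2}(x,s,q)$ for $n\ge2$; $U_{-1}=0$, $U_0=1$, $U_n(x,s,q)=(1+q^{n})x\,U_{n-1}(x,s,q)+q^{n-1}s\,U_{n-2}(x,s,q)$ for $n\ge1$. An $n$-board is a $1\times n$ rectangle with cells $1,\dots,n$, tiled by white squares, black squares (one cell each) and dominoes (two adjacent cells). Weight: white square $x$; black square at cell $i$: $q^ix$; domino covering cells $i-1,i$: $q^{i-1}s$; a tiling's weight is the product of its tiles' weights and a set's weight is the sum over its elements. *)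

theory Defs
  imports Main "HOL.Real"
begin

fun T :: "nat \<Rightarrow> real \<Rightarrow> real \<Rightarrow> real \<Rightarrow> real" where
  "T 0 x s q = 1"
| "T (Suc 0) x s q = x"
| "T (Suc (Suc k)) x s q =
     (1 + q ^ (Suc k)) * x * T (Suc k) x s q + q ^ (Suc k) * s * T k x s q"

(* Ush k x s q = U_{k-1}(x,s,q), i.e. U shifted by one so that U_{-1} is representable *)
fun Ush :: "nat \<Rightarrow> real \<Rightarrow> real \<Rightarrow> real \<Rightarrow> real" where
  "Ush 0 x s q = 0"
| "Ush (Suc 0) x s q = 1"
| "Ush (Suc (Suc k)) x s q =
     (1 + q ^ (Suc k)) * x * Ush (Suc k) x s q + q ^ k * s * Ush k x s q"

definition U :: "int \<Rightarrow> real \<Rightarrow> real \<Rightarrow> real \<Rightarrow> real" where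
  "U m x s q = Ush (nat (m + 1)) x s q"

datatype tile = White | Black | Domino

fun tlen :: "tile \<Rightarrow> nat" where
  "tlen White = 1" | "tlen Black = 1" | "tlen Domino = 2"

(* tilings of an n-board, listed left to right *)
definition tilings :: "nat \<Rightarrow> tile list set" where
  "tilings n = {ts. sum_list (map tlen ts) = n}"

(* weight of a tiling whose first tile starts right after cell i (cells i+1, ...) *)
fun wt :: "real \<Rightarrow> real \<Rightarrow> real \<Rightarrow> nat \<Rightarrow> tile list \<Rightarrow> real" where
  "wt x s q i [] = 1"
| "wt x s q i (White # ts) = x * wt x s q (i + 1) ts"
| "wt x s q i (Black # ts) = q ^ (i + 1) * x * wt x s q (i + 1) ts"
| "wt x s q i (Domino # ts) = q ^ (i + 1) * s * wt x s q (i + 2) ts"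

definition weight :: "real \<Rightarrow> real \<Rightarrow> real \<Rightarrow> tile list \<Rightarrow> real" where
  "weight x s q ts = wt x s q 0 ts"

end

theory Submission
  imports Defs
begin

lemma two_induct:
  assumes "P 0" "P (Suc 0)" "\<And>k. P k \<Longrightarrow> P (Suc k) \<Longrightarrow> P (Suc (Suc k))"
  shows "P n"
proof -
  have "P n \<and> P (Suc n)" by (induction n) (use assms in auto)
  then show ?thesis by simp
qed

lemma tlen_pos0: "tlen t > 0" by (cases t) auto

lemma sum0_nil: "sum_list (map tlen ts) = 0 \<Longrightarrow> ts = []"
proof (cases ts)
  case (Cons a l)
  assume "sum_list (map tlen ts) = 0"
  then have "tlen a = 0" using Cons by simp
  then show ?thesis using tlen_pos0[of a] by simp
qed

lemma T_Ush: "T (Suc n) x s q = x * Ush (Suc n) x s q + q ^ n * s * Ush n x s q"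
proof (induction n rule: two_induct)
  case (3 k)
  have u: "Ush (Suc (Suc (Suc k))) x s q = (1 + q ^ Suc (Suc k)) * x * Ush (Suc (Suc k)) x s q + q ^ Suc k * s * Ush (Suc k) x s q"
    by simp
  have u2: "Ush (Suc (Suc k)) x s q = (1 + q ^ Suc k) * x * Ush (Suc k) x s q + q ^ k * s * Ush k x s q"
    by simp
  show ?case
    apply (subst T.simps(3))
    apply (subst "3.IH"(1))
    apply (subst "3.IH"(2))
    apply (subst u)
    apply (subst u2)
    apply (simp add: algebra_simps power_add)
    done
qed auto

lemma wt_snoc:
  "wt x s q i (ts @ [White]) = wt x s q i ts * x"
  "wt x s q i (ts @ [Black]) = wt x s q i ts * (q ^ (i + sum_list (map tlen ts) + 1) * x)"
  "wt x s q i (ts @ [Domino]) = wt x s q i ts * (q ^ (i + sum_list (map tlen ts) + 1) * s)"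
  by (induction x s q i ts rule: wt.induct) (auto simp: algebra_simps)

lemma tlen_pos: "tlen t > 0" by (cases t) auto

lemma tilings_0: "tilings 0 = {[]}"
  unfolding tilings_def using sum0_nil by auto

lemma tilings_1: "tilings (Suc 0) = {[White], [Black]}"
proof -
  have "sum_list (map tlen ts) = Suc 0 \<Longrightarrow> ts = [White] \<or> ts = [Black]" for ts
  proof (cases ts rule: rev_exhaust)
    case (snoc ys t)
    assume h: "sum_list (map tlen ts) = Suc 0"
    then have "sum_list (map tlen ys) + tlen t = 1" using snoc by simp
    moreover have "tlen t > 0" by (rule tlen_pos)
    ultimately have "sum_list (map tlen ys) = 0" "tlen t = 1" by linarith+
    then have "ys = []" using sum0_nil by auto
    then show ?thesis using snoc \<open>tlen t = 1\<close> by (cases t) auto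
  qed auto
  then show ?thesis unfolding tilings_def by auto
qed

lemma tilings_SS: "tilings (Suc (Suc k)) = (\<lambda>ts. ts@[White]) ` tilings (Suc k) \<union> (\<lambda>ts. ts@[Black]) ` tilings (Suc k) \<union> (\<lambda>ts. ts@[Domino]) ` tilings k"
proof
  show "tilings (Suc (Suc k)) \<subseteq> (\<lambda>ts. ts@[White]) ` tilings (Suc k) \<union> (\<lambda>ts. ts@[Black]) ` tilings (Suc k) \<union> (\<lambda>ts. ts@[Domino]) ` tilings k"
  proof
    fix ts assume "ts \<in> tilings (Suc (Suc k))"
    then have h: "sum_list (map tlen ts) = Suc (Suc k)" by (simp add: tilings_def)
    show "ts \<in> (\<lambda>ts. ts@[White]) ` tilings (Suc k) \<union> (\<lambda>ts. ts@[Black]) ` tilings (Suc k) \<union> (\<lambda>ts. ts@[Domino]) ` tilings k"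
    proof (cases ts rule: rev_exhaust)
      case Nil then show ?thesis using h by simp
    next
      case (snoc ys t)
      then show ?thesis using h by (cases t) (auto simp: tilings_def)
    qed
  qed
qed (auto simp: tilings_def)

lemma finite_tilings: "finite (tilings n)"
  by (induction n rule: two_induct) (auto simp: tilings_0 tilings_1 tilings_SS)

definition A where "A x s q n = (\<Sum>ts\<in>tilings n. weight x s q ts)"

lemma inj_snoc: "inj_on (\<lambda>ts. ts @ [a]) X" by (auto simp: inj_on_def)

lemma A_SS: "A x s q (Suc (Suc k)) = (1 + q ^ Suc (Suc k)) * x * A x s q (Suc k) + q ^ Suc k * s * A x s q k"
proof -
  let ?W = "(\<lambda>ts. ts@[White]) ` tilings (Suc k)"
  let ?B = "(\<lambda>ts. ts@[Black]) ` tilings (Suc k)"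
  let ?D = "(\<lambda>ts. ts@[Domino]) ` tilings k"
  have f: "finite ?W" "finite ?B" "finite ?D" using finite_tilings by auto
  have d: "(?W \<union> ?B) \<inter> ?D = {}" "?W \<inter> ?B = {}" by auto
  have "A x s q (Suc (Suc k)) = sum (weight x s q) ?W + sum (weight x s q) ?B + sum (weight x s q) ?D"
    unfolding A_def tilings_SS
    by (simp add: sum.union_disjoint f d)
  also have "sum (weight x s q) ?W = x * A x s q (Suc k)"
    by (simp add: sum.reindex inj_snoc weight_def wt_snoc A_def sum_distrib_left mult.commute)
  also have "sum (weight x s q) ?B = q ^ Suc (Suc k) * x * A x s q (Suc k)"
    by (simp add: sum.reindex inj_snoc weight_def wt_snoc A_def sum_distrib_left mult.commute tilings_def)
  also have "sum (weight x s q) ?D = q ^ Suc k * s * A x s q k"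
    by (simp add: sum.reindex inj_snoc weight_def wt_snoc A_def sum_distrib_left mult.commute tilings_def)
  finally show ?thesis by (simp add: algebra_simps)
qed

lemma A_Ush: "A x s q n = Ush (Suc n) x s q"
proof (induction n rule: two_induct)
  case 1 then show ?case by (simp add: A_def tilings_0 weight_def)
next
  case 2 then show ?case by (simp add: A_def tilings_1 weight_def algebra_simps)
next
  case (3 k) then show ?case by (simp only: A_SS Ush.simps(3)) 
qed

lemma W_eq: "(\<Sum>ts\<in>{ts \<in> tilings (Suc n). last ts = White \<or> last ts = Domino}. weight x s q ts)
   = x * Ush (Suc n) x s q + q ^ n * s * Ush n x s q"
proof (cases n)
  case 0
  have "{ts \<in> tilings (Suc 0). last ts = White \<or> last ts = Domino} = {[White]}"
    by (auto simp: tilings_1)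
  then show ?thesis using 0 by (simp add: weight_def)
next
  case (Suc k)
  let ?W = "(\<lambda>ts. ts@[White]) ` tilings (Suc k)"
  let ?D = "(\<lambda>ts. ts@[Domino]) ` tilings k"
  have e: "{ts \<in> tilings (Suc (Suc k)). last ts = White \<or> last ts = Domino} = ?W \<union> ?D"
    unfolding tilings_SS by auto
  have f: "finite ?W" "finite ?D" using finite_tilings by auto
  have d: "?W \<inter> ?D = {}" by auto
  have "(\<Sum>ts\<in>{ts \<in> tilings (Suc n). last ts = White \<or> last ts = Domino}. weight x s q ts)
      = sum (weight x s q) ?W + sum (weight x s q) ?D"
    using Suc e by (simp add: sum.union_disjoint f d)
  also have "sum (weight x s q) ?W = x * A x s q (Suc k)"
    by (simp add: sum.reindex inj_snoc weight_def wt_snoc A_def sum_distrib_left mult.commute)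
  also have "sum (weight x s q) ?D = q ^ Suc k * s * A x s q k"
    by (simp add: sum.reindex inj_snoc weight_def wt_snoc A_def sum_distrib_left mult.commute tilings_def)
  finally show ?thesis using Suc by (simp add: A_Ush)
qed

theorem theorem2p4:
  fixes x s q :: real and n :: nat
  assumes "q \<noteq> -1" and "n \<ge> 1"
  shows "T n x s q = (\<Sum>ts\<in>{ts \<in> tilings n. last ts = White \<or> last ts = Domino}. weight x s q ts)
         \<and> T n x s q = x * U (int n - 1) x s q + q ^ (n - 1) * s * U (int n - 2) x s q"
proof -
  obtain m where m: "n = Suc m" using assms(2) by (cases n) auto
  have u1: "U (int n - 1) x s q = Ush (Suc m) x s q" unfolding U_def m by (simp add: nat_int_add Suc_as_int)
  have u2: "U (int n - 2) x s q = Ush m x s q" unfolding U_def m by (simp add: nat_diff_distrib)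
  show ?thesis using T_Ush[where n=m and x=x and s=s and q=q] W_eq[where n=m and x=x and s=s and q=q] m u1 u2 by simp
qed

end
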